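(* Let $k \geq 1$ and $p \geq 1$ be integers, let $B \in \mathbb{R}^{N\times N}$, let $P \in \mathbb{R}^{N\times N}$ be a diagonal matrix whose diagonal entries are each $0$ or $1$, and let $y(t) = e^{tB}y^0$ be the solution of $y'(t) = B y(t)$ for some $y^0 \in \mathbb{R}^N$. Fix $t_n$ and $\Delta t > 0$. Apply one step of the LTS-AB$k$($p$) scheme (defined in the context) with exact input data $$y_{n-\ell} = y(t_n - \ell \Delta t), \quad \ell = 0,\dots,k-1, \qquad \widetilde y_{-j/p} = P\, y(t_n - j\Delta t/p), \quad j = 1,\dots,k-1,$$ producing $y_{n+1}$. Then the scheme is consistent of order $k$: there is a constant $C$ depending only on $k$, $p$, $B$, $P$ and $y^0$ (and on an upper bound for $|t_n|$) such that for all sufficiently small $\Delta t>0$, $$\| y_{n+1} - y(t_n + \Delta t)\| \leq C\, \Delta t^{k+1}.$$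
   Context: Polynomials: for integer $j\ge 0$, $\gamma_j(\xi) = (-1)^j \int_0^{\xi} \binom{-s}{j}\, ds$ and $\widetilde\gamma_j(\xi) = \gamma_j'(\xi) = (-1)^j\binom{-\xi}{j} = \xi(\xi+1)\cdots(\xi+j-1)/j!$ (with $\widetilde\gamma_0\equiv 1$), where $\binom{x}{j} = x(x-1)\cdots(x-j+1)/j!$. Adams–Bashforth coefficients: $\alpha_\ell = (-1)^\ell \sum_{i=\ell}^{k-1}\binom{i}{\ell}\gamma_i(1)$, $\ell=0,\dots,k-1$ (the classical $k$-step Adams–Bashforth scheme is $y_{n+1} = y_n + \Delta t\, B\sum_{\ell=0}^{k-1}\alpha_\ell y_{n-\ell}$). LTS coefficients: $\beta_{m,\ell} = \sum_{i=0}^{k-1} \alpha_i \sum_{j=\ell}^{k-1} (-1)^\ell \binom{j}{\ell}\, \widetilde\gamma_j\!\left(\frac{m-i}{p}\right)$ for $m=0,\dots,p-1$, $\ell=0,\dots,k-1$. LTS-AB$k$($p$) step: set $\widetilde y_0 := y_n$ (the values $\widetilde y_{-j/p}$, $j=1,\dots,k-1$, are given inputs; note $\widetilde y_{-j/p}$ for $j \geq p$ refers to a past time $t_n - j\Delta t/p$ as well). For $m = 0,1,\dots,p-1$ compute $$\widetilde y_{(m+1)/p} = \widetilde y_{m/p} + \frac{\Delta t}{p}\, B(I-P)\sum_{\ell=0}^{k-1}\beta_{m,\ell}\, y_{n-\ell} + \frac{\Delta t}{p}\, BP\sum_{\ell=0}^{k-1}\alpha_\ell\, \widetilde y_{(m-\ell)/p},$$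 and set $y_{n+1} := \widetilde y_1$. For $P=0$ or $p=1$ this reduces to the classical $k$-step Adams–Bashforth method. Here $I$ is the $N\times N$ identity and $\|\cdot\|$ any norm on $\mathbb{R}^N$. *)

theory Defs
  imports "HOL-Analysis.Analysis"
begin

text \<open>gamma_j(xi) = (-1)^j * integral from 0 to xi of binom(-s, j) ds (oriented integral).\<close>
definition ab_gamma :: "nat \<Rightarrow> real \<Rightarrow> real" where
  "ab_gamma j \<xi> = (-1) ^ j *
     (if 0 \<le> \<xi> then integral {0..\<xi>} (\<lambda>s. (- s) gchoose j)
      else - integral {\<xi>..0} (\<lambda>s. (- s) gchoose j))"

text \<open>tilde gamma_j(xi) = (-1)^j binom(-xi, j).\<close>
definition ab_gamma_tilde :: "nat \<Rightarrow> real \<Rightarrow> real" where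
  "ab_gamma_tilde j \<xi> = (-1) ^ j * ((- \<xi>) gchoose j)"

text \<open>Adams--Bashforth coefficients alpha_l for the k-step scheme.\<close>
definition ab_alpha :: "nat \<Rightarrow> nat \<Rightarrow> real" where
  "ab_alpha k l = (-1) ^ l * (\<Sum>i = l..<k. real (i choose l) * ab_gamma i 1)"

text \<open>LTS coefficients beta_{m,l}.\<close>
definition lts_beta :: "nat \<Rightarrow> nat \<Rightarrow> nat \<Rightarrow> nat \<Rightarrow> real" where
  "lts_beta k p m l = (\<Sum>i<k. ab_alpha k i *
      (\<Sum>j = l..<k. (-1) ^ l * real (j choose l) *
          ab_gamma_tilde j ((real m - real i) / real p)))"

text \<open>History of the inner LTS stages: lts_hist ... m q is tilde y_{q/p}
  for integer q with -(k-1) <= q <= m.  Inputs: yh l = y_{n-l} (l = 0..k-1),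
  yin j = tilde y_{-j/p} (j = 1..k-1).  tilde y_0 := y_n.\<close>
primrec lts_hist :: "nat \<Rightarrow> nat \<Rightarrow> real^'n^'n \<Rightarrow> real^'n^'n \<Rightarrow> real \<Rightarrow>
    (nat \<Rightarrow> real^'n) \<Rightarrow> (nat \<Rightarrow> real^'n) \<Rightarrow> nat \<Rightarrow> int \<Rightarrow> real^'n" where
  "lts_hist k p B P dt yh yin 0 =
     (\<lambda>q. if q = 0 then yh 0 else yin (nat (- q)))"
| "lts_hist k p B P dt yh yin (Suc m) =
     (let h = lts_hist k p B P dt yh yin m in
      h(int (Suc m) :=
          h (int m)
          + (dt / real p) *\<^sub>R ((B ** (mat 1 - P)) *v (\<Sum>l<k. lts_beta k p m l *\<^sub>R yh l))
          + (dt / real p) *\<^sub>R ((B ** P) *v (\<Sum>l<k. ab_alpha k l *\<^sub>R h (int m - int l)))))"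

text \<open>One LTS-ABk(p) step: y_{n+1} := tilde y_1 = tilde y_{p/p}.\<close>
definition lts_step :: "nat \<Rightarrow> nat \<Rightarrow> real^'n^'n \<Rightarrow> real^'n^'n \<Rightarrow> real \<Rightarrow>
    (nat \<Rightarrow> real^'n) \<Rightarrow> (nat \<Rightarrow> real^'n) \<Rightarrow> real^'n" where
  "lts_step k p B P dt yh yin = lts_hist k p B P dt yh yin p (int p)"

end

theory Submission
  imports Defs "HOL-Computational_Algebra.Polynomial"
begin

definition Gp :: "nat \<Rightarrow> real poly" where
  "Gp j = smult (1 / fact j) (\<Prod>i<j. [:real i, 1:])"

lemma prod_neg_shift: "(-1::real) ^ j * (\<Prod>i = 0..<j. - \<xi> - real i) = (\<Prod>i<j. real i + \<xi>)"
  by (induction j) (auto simp: atLeast0LessThan algebra_simps)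

lemma poly_Gp: "poly (Gp j) \<xi> = ab_gamma_tilde j \<xi>"
  by (simp add: Gp_def ab_gamma_tilde_def poly_prod gbinomial_prod_rev prod_neg_shift[symmetric])

lemma degree_Gp: "degree (Gp j) \<le> j"
proof -
  have "degree (\<Prod>i<j. [:real i, 1:]) \<le> (\<Sum>i<j. degree [:real i, 1:])"
    using degree_prod_sum_le[of "{..<j}" "\<lambda>i. [:real i, 1:]"] by (simp add: o_def)
  also have "\<dots> = j" by simp
  finally show ?thesis unfolding Gp_def using degree_smult_le order_trans by blast
qed

lemma gt_neg_nat: "ab_gamma_tilde j (- real n) = (-1)^j * real (n choose j)"
  by (simp add: ab_gamma_tilde_def binomial_gbinomial)

lemma swap_tri: "(\<Sum>l<(k::nat). \<Sum>j\<in>{l..<k}. F j l) = (\<Sum>j<k. \<Sum>l\<le>j. F j l :: real)"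
proof (induction k)
  case 0 then show ?case by simp
next
  case (Suc k)
  have "(\<Sum>l<Suc k. \<Sum>j\<in>{l..<Suc k}. F j l) = (\<Sum>l<Suc k. (\<Sum>j\<in>{l..<k}. F j l) + F k l)"
    by (intro sum.cong) (auto simp: atLeastLessThanSuc)
  also have "\<dots> = (\<Sum>l<Suc k. \<Sum>j\<in>{l..<k}. F j l) + (\<Sum>l<Suc k. F k l)"
    by (simp only: sum.distrib)
  also have "(\<Sum>l<Suc k. \<Sum>j\<in>{l..<k}. F j l) = (\<Sum>l<k. \<Sum>j\<in>{l..<k}. F j l)"
    by (subst sum.lessThan_Suc) simp
  also have "(\<Sum>l<Suc k. F k l) = (\<Sum>l\<le>k. F k l)"
    by (simp only: lessThan_Suc_atMost)
  finally show ?case using Suc by simp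
qed

lemma alt_inner:
  assumes "l \<le> n"
  shows "(\<Sum>j=l..n. (-1)^j * real (n choose j) * real (j choose l)) = (if l = n then (-1)^n else 0)"
proof -
  have "(\<Sum>j=l..n. (-1)^j * real (n choose j) * real (j choose l))
      = (\<Sum>i=0..n-l. (-1)^(l+i) * real (n choose (l+i)) * real ((l+i) choose l))"
    using sum.atLeastAtMost_shift_0[OF assms] by (simp add: o_def)
  also have "\<dots> = (\<Sum>i=0..n-l. (-1)^l * real (n choose l) * ((-1)^i * real ((n-l) choose i)))"
  proof (intro sum.cong refl)
    fix i assume "i \<in> {0..n-l}"
    hence "l + i \<le> n" using assms by auto
    hence "(n choose (l+i)) * ((l+i) choose l) = (n choose l) * ((n - l) choose i)"
      using choose_mult[of l "l+i" n] by simp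
    hence "real (n choose (l+i)) * real ((l+i) choose l) = real (n choose l) * real ((n - l) choose i)"
      by (metis of_nat_mult)
    thus "(-1)^(l+i) * real (n choose (l+i)) * real ((l+i) choose l) = (-1)^l * real (n choose l) * ((-1)^i * real ((n-l) choose i))"
      by (simp add: power_add algebra_simps)
  qed
  also have "\<dots> = (-1)^l * real (n choose l) * (\<Sum>i\<le>n-l. (-1)^i * real ((n-l) choose i))"
    by (simp add: sum_distrib_left atLeast0AtMost)
  also have "\<dots> = (if l = n then (-1)^n else 0)"
  proof (cases "l = n")
    case True then show ?thesis by simp
  next
    case False
    hence "n - l > 0" using assms by simp
    from choose_alternating_sum[OF this, where 'a=real] show ?thesis using False by simp
  qed
  finally show ?thesis .
qed

definition nab :: "(nat \<Rightarrow> real) \<Rightarrow> nat \<Rightarrow> real" where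
  "nab f j = (\<Sum>l\<le>j. (-1)^l * real (j choose l) * f l)"

lemma inversion:
  assumes "n < k"
  shows "(\<Sum>j<k. (-1)^j * real (n choose j) * nab f j) = f n"
proof -
  have "(\<Sum>j<k. (-1)^j * real (n choose j) * nab f j) = (\<Sum>j\<le>n. (-1)^j * real (n choose j) * nab f j)"
    using assms by (intro sum.mono_neutral_right) auto
  also have "\<dots> = (\<Sum>j\<le>n. \<Sum>l\<le>j. (-1)^j * real (n choose j) * ((-1)^l * real (j choose l) * f l))"
    by (simp add: nab_def sum_distrib_left)
  also have "\<dots> = (\<Sum>l\<le>n. \<Sum>j\<in>{l..n}. (-1)^j * real (n choose j) * ((-1)^l * real (j choose l) * f l))"
  proof -
    have "(\<Sum>j\<le>n. \<Sum>l\<le>j. (-1)^j * real (n choose j) * ((-1)^l * real (j choose l) * f l))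
       = (\<Sum>j\<le>n. \<Sum>l\<in>{l. l \<in> {..n} \<and> l \<le> j}. (-1)^j * real (n choose j) * ((-1)^l * real (j choose l) * f l))"
      by (intro sum.cong refl) auto
    also have "\<dots> = (\<Sum>l\<le>n. \<Sum>j\<in>{j. j \<in> {..n} \<and> l \<le> j}. (-1)^j * real (n choose j) * ((-1)^l * real (j choose l) * f l))"
      by (rule sum.swap_restrict) auto
    also have "\<dots> = (\<Sum>l\<le>n. \<Sum>j\<in>{l..n}. (-1)^j * real (n choose j) * ((-1)^l * real (j choose l) * f l))"
      by (intro sum.cong refl) auto
    finally show ?thesis .
  qed
  also have "\<dots> = (\<Sum>l\<le>n. (-1)^l * f l * (\<Sum>j\<in>{l..n}. (-1)^j * real (n choose j) * real (j choose l)))"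
    by (simp add: sum_distrib_left algebra_simps)
  also have "\<dots> = (\<Sum>l\<le>n. if l = n then f n else 0)"
    by (intro sum.cong refl) (auto simp: alt_inner power_add[symmetric])
  also have "\<dots> = f n" by simp
  finally show ?thesis .
qed

lemma newton:
  assumes "degree q < k"
  shows "(\<Sum>j<k. ab_gamma_tilde j \<xi> * nab (\<lambda>l. poly q (- real l)) j) = poly q \<xi>"
proof -
  define Np where "Np = (\<Sum>j<k. smult (nab (\<lambda>l. poly q (- real l)) j) (Gp j))"
  have polyNp: "poly Np x = (\<Sum>j<k. ab_gamma_tilde j x * nab (\<lambda>l. poly q (- real l)) j)" for x
    by (simp add: Np_def poly_sum poly_Gp mult.commute)
  have "degree Np \<le> k - 1"
    unfolding Np_def
  proof (rule degree_sum_le)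
    fix j assume "j \<in> {..<k}"
    hence "j \<le> k - 1" by auto
    thus "degree (smult (nab (\<lambda>l. poly q (- real l)) j) (Gp j)) \<le> k - 1"
      using order_trans[OF degree_smult_le order_trans[OF degree_Gp]] by blast
  qed simp
  define D where "D = q - Np"
  have degD: "degree D < k"
    using assms \<open>degree Np \<le> k - 1\<close> degree_diff_le[of q "k-1" Np] unfolding D_def by linarith
  have roots: "poly D (- real n) = 0" if "n < k" for n
  proof -
    have "poly Np (- real n) = (\<Sum>j<k. (-1)^j * real (n choose j) * nab (\<lambda>l. poly q (- real l)) j)"
      by (simp add: polyNp gt_neg_nat)
    also have "\<dots> = poly q (- real n)" using inversion[OF that] .
    finally show ?thesis by (simp add: D_def)
  qed
  have "D = 0"
  proof (rule ccontr)
    assume "D \<noteq> 0"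
    have "(\<lambda>n. - real n) ` {..<k} \<subseteq> {x. poly D x = 0}" using roots by auto
    hence "card ((\<lambda>n. - real n) ` {..<k}) \<le> card {x. poly D x = 0}"
      using poly_roots_finite[OF \<open>D \<noteq> 0\<close>] by (intro card_mono) auto
    moreover have "card ((\<lambda>n. - real n) ` {..<k}) = k"
      by (subst card_image) (auto simp: inj_on_def)
    ultimately show False using card_poly_roots_bound[OF \<open>D \<noteq> 0\<close>] degD by linarith
  qed
  thus ?thesis using polyNp[of \<xi>] by (simp add: D_def)
qed



lemma gamma_integral: "ab_gamma i 1 = integral {0..1} (ab_gamma_tilde i)"
proof -
  have "integral {0..1} (ab_gamma_tilde i) = (-1)^i * integral {0..1} (\<lambda>s. (- s) gchoose i)"
    unfolding ab_gamma_tilde_def by (rule integral_mult_right)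
  thus ?thesis by (simp add: ab_gamma_def)
qed

lemma gt_has_integral: "(ab_gamma_tilde i has_integral ab_gamma i 1) {0..1}"
proof -
  have "continuous_on {0..1} (poly (Gp i))" by (rule continuous_on_poly) (rule continuous_on_id)
  hence "poly (Gp i) integrable_on {0..1}" by (rule integrable_continuous_interval)
  moreover have "poly (Gp i) = ab_gamma_tilde i" by (rule ext) (simp add: poly_Gp)
  ultimately show ?thesis using gamma_integral integrable_integral by metis
qed

lemma ab_poly:
  assumes "degree q < k"
  shows "(\<Sum>l<k. ab_alpha k l * poly q (- real l)) = integral {0..1} (poly q)"
proof -
  define f where "f = (\<lambda>l. poly q (- real l))"
  have "(\<Sum>l<k. ab_alpha k l * f l) = (\<Sum>l<k. \<Sum>i\<in>{l..<k}. ab_gamma i 1 * ((-1)^l * real (i choose l) * f l))"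
    by (simp add: ab_alpha_def sum_distrib_left sum_distrib_right algebra_simps)
  also have "\<dots> = (\<Sum>i<k. \<Sum>l\<le>i. ab_gamma i 1 * ((-1)^l * real (i choose l) * f l))"
    by (rule swap_tri)
  also have "\<dots> = (\<Sum>i<k. ab_gamma i 1 * nab f i)"
    by (simp add: nab_def sum_distrib_left)
  finally have L: "(\<Sum>l<k. ab_alpha k l * f l) = (\<Sum>i<k. ab_gamma i 1 * nab f i)" .
  have "((\<lambda>s. \<Sum>i<k. ab_gamma_tilde i s * nab f i) has_integral (\<Sum>i<k. ab_gamma i 1 * nab f i)) {0..1}"
    by (intro has_integral_sum has_integral_mult_left gt_has_integral) simp
  moreover have "(\<lambda>s. \<Sum>i<k. ab_gamma_tilde i s * nab f i) = poly q"
    by (rule ext) (use newton[OF assms] in \<open>simp add: f_def\<close>)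
  ultimately have "integral {0..1} (poly q) = (\<Sum>i<k. ab_gamma i 1 * nab f i)"
    by (metis integral_unique)
  thus ?thesis using L by (simp add: f_def)
qed

lemma int_pow: "integral {0..1} (\<lambda>s. (x + s) ^ r) = ((x+1)^(Suc r) - x^(Suc r)) / real (Suc r)"
proof -
  have "((\<lambda>s. (x + s) ^ r) has_integral ((\<lambda>s. (x+s)^(Suc r) / real (Suc r)) 1 - (\<lambda>s. (x+s)^(Suc r) / real (Suc r)) 0)) {0..1}"
  proof (rule fundamental_theorem_of_calculus)
    fix s :: real
    have e: "(x + s) ^ r + real r * (x + s) ^ (r - Suc 0) * (x + s) = real (Suc r) * (x+s)^r"
      by (cases r) (simp_all add: algebra_simps)
    have "((\<lambda>s. (x+s)^(Suc r) / real (Suc r)) has_real_derivative (x+s)^r) (at s within {0..1})"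
      by (auto intro!: derivative_eq_intros simp del: of_nat_Suc simp add: e)
    thus "((\<lambda>s. (x+s)^(Suc r) / real (Suc r)) has_vector_derivative (x+s)^r) (at s within {0..1})"
      by (simp add: has_real_derivative_iff_has_vector_derivative)
  qed simp
  thus ?thesis by (simp add: integral_unique diff_divide_distrib add.commute)
qed

lemma ab_exact:
  assumes "r < k"
  shows "(\<Sum>l<k. ab_alpha k l * (x - real l) ^ r) = ((x+1)^(Suc r) - x^(Suc r)) / real (Suc r)"
proof -
  define q where "q = [:x, 1:] ^ r"
  have "degree q < k" using assms by (simp add: q_def degree_linear_power)
  from ab_poly[OF this] have "(\<Sum>l<k. ab_alpha k l * poly q (- real l)) = integral {0..1} (poly q)" .
  moreover have "poly q = (\<lambda>s. (x + s) ^ r)" by (rule ext) (simp add: q_def)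
  ultimately show ?thesis by (simp add: int_pow)
qed

lemma beta_exact:
  assumes "r < k" "p \<ge> 1"
  shows "(\<Sum>l<k. lts_beta k p m l * (- real l * real p) ^ r)
     = ((real m + 1)^(Suc r) - real m^(Suc r)) / real (Suc r)"
proof -
  define q where "q = [:0, real p:] ^ r"
  have dq: "degree q < k"
  proof -
    have "degree q \<le> degree [:0, real p:] * r" unfolding q_def by (rule degree_power_le)
    also have "\<dots> \<le> r" by (simp add: degree_pCons_eq_if)
    finally show ?thesis using assms by simp
  qed
  have pq: "poly q s = (s * real p) ^ r" for s by (simp add: q_def)
  define f where "f = (\<lambda>l. poly q (- real l))"
  define \<xi> where "\<xi> i = (real m - real i) / real p" for i
  have "(\<Sum>l<k. lts_beta k p m l * f l)
      = (\<Sum>l<k. \<Sum>i<k. ab_alpha k i * (\<Sum>j\<in>{l..<k}. ab_gamma_tilde j (\<xi> i) * ((-1)^l * real (j choose l) * f l)))"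
    by (simp add: lts_beta_def \<xi>_def sum_distrib_left sum_distrib_right algebra_simps)
  also have "\<dots> = (\<Sum>i<k. ab_alpha k i * (\<Sum>l<k. \<Sum>j\<in>{l..<k}. ab_gamma_tilde j (\<xi> i) * ((-1)^l * real (j choose l) * f l)))"
    by (subst sum.swap) (simp add: sum_distrib_left)
  also have "\<dots> = (\<Sum>i<k. ab_alpha k i * (\<Sum>j<k. \<Sum>l\<le>j. ab_gamma_tilde j (\<xi> i) * ((-1)^l * real (j choose l) * f l)))"
    by (simp only: swap_tri)
  also have "\<dots> = (\<Sum>i<k. ab_alpha k i * (\<Sum>j<k. ab_gamma_tilde j (\<xi> i) * nab f j))"
    by (simp add: nab_def sum_distrib_left)
  also have "\<dots> = (\<Sum>i<k. ab_alpha k i * poly q (\<xi> i))"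
    using newton[OF dq] by (simp add: f_def)
  also have "\<dots> = (\<Sum>i<k. ab_alpha k i * (real m - real i) ^ r)"
    using assms(2) by (simp add: pq \<xi>_def)
  also have "\<dots> = ((real m + 1)^(Suc r) - real m^(Suc r)) / real (Suc r)"
    by (rule ab_exact[OF assms(1)])
  finally show ?thesis by (simp add: f_def pq mult_ac)
qed



lemma mv_sum: "(A::real^'n^'m) *v sum f S = (\<Sum>x\<in>S. A *v f x)"
  by (induction S rule: infinite_finite_induct) (simp_all add: matrix_vector_right_distrib)

definition tp :: "real^'n^'n \<Rightarrow> nat \<Rightarrow> real^'n \<Rightarrow> real \<Rightarrow> real^'n" where
  "tp B n v s = (\<Sum>r<n. (s^r / fact r) *\<^sub>R (((*v) B ^^ r) v))"

lemma tp_0: "tp B (Suc n) v 0 = v"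
  unfolding tp_def by (subst sum.lessThan_Suc_shift) simp

lemma tp_deriv: "(tp B (Suc n) v has_vector_derivative (B *v tp B n v s)) (at s)"
proof -
  have d: "((\<lambda>s. (s^r / fact r) *\<^sub>R (((*v) B ^^ r) v)) has_vector_derivative
           ((real r * s^(r - 1) / fact r) *\<^sub>R (((*v) B ^^ r) v))) (at s)" for r
    by (auto intro!: derivative_eq_intros)
  have "(tp B (Suc n) v has_vector_derivative
        (\<Sum>r<Suc n. (real r * s^(r - 1) / fact r) *\<^sub>R (((*v) B ^^ r) v))) (at s)"
    unfolding tp_def[abs_def] by (intro has_vector_derivative_sum d)
  moreover have "(\<Sum>r<Suc n. (real r * s^(r - 1) / fact r) *\<^sub>R (((*v) B ^^ r) v)) = B *v tp B n v s"
  proof -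
    have "(\<Sum>r<Suc n. (real r * s^(r - 1) / fact r) *\<^sub>R (((*v) B ^^ r) v))
        = (\<Sum>r<n. (real (Suc r) * s^r / fact (Suc r)) *\<^sub>R (((*v) B ^^ Suc r) v))"
      by (subst sum.lessThan_Suc_shift) simp
    also have "\<dots> = (\<Sum>r<n. (s^r / fact r) *\<^sub>R (B *v (((*v) B ^^ r) v)))"
      by (intro sum.cong refl) (simp add: fact_Suc)
    also have "\<dots> = B *v tp B n v s"
      by (simp add: tp_def mv_sum matrix_vector_mult_scaleR)
    finally show ?thesis .
  qed
  ultimately show ?thesis by simp
qed

lemma taylor_bound:
  fixes B :: "real^'n^'n" and y :: "real \<Rightarrow> real^'n"
  assumes deriv: "\<forall>t. (y has_vector_derivative (B *v y t)) (at t)" and "S \<ge> 0"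
  shows "\<exists>K\<ge>0. \<forall>t0 s. \<bar>t0\<bar> \<le> T \<longrightarrow> \<bar>s\<bar> \<le> S \<longrightarrow> norm (y (t0 + s) - tp B n (y t0) s) \<le> K * \<bar>s\<bar> ^ n"
proof (induction n)
  case 0
  have "continuous_on {-T-S..T+S} y"
    using deriv by (meson continuous_at_imp_continuous_on has_vector_derivative_continuous)
  hence "bounded (y ` {-T-S..T+S})" by (intro compact_imp_bounded compact_continuous_image) auto
  then obtain K where K: "K > 0" "\<And>x. x \<in> y ` {-T-S..T+S} \<Longrightarrow> norm x \<le> K" by (auto simp: bounded_pos)
  show ?case
  proof (intro exI[of _ K] conjI allI impI)
    fix t0 s assume "\<bar>t0\<bar> \<le> T" "\<bar>s\<bar> \<le> S"
    hence "t0 + s \<in> {-T-S..T+S}" by auto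
    thus "norm (y (t0 + s) - tp B 0 (y t0) s) \<le> K * \<bar>s\<bar> ^ 0" using K by (simp add: tp_def)
  qed (use K in auto)
next
  case (Suc n)
  then obtain K where K: "K \<ge> 0" "\<And>t0 s. \<bar>t0\<bar> \<le> T \<Longrightarrow> \<bar>s\<bar> \<le> S \<Longrightarrow> norm (y (t0 + s) - tp B n (y t0) s) \<le> K * \<bar>s\<bar> ^ n"
    by blast
  obtain KB where KB: "KB > 0" "\<And>v. norm (B *v v) \<le> norm v * KB"
    using bounded_linear.pos_bounded[OF matrix_vector_mul_bounded_linear[of B]] by blast
  show ?case
  proof (intro exI[of _ "KB * K"] conjI allI impI)
    show "0 \<le> KB * K" using KB K by simp
    fix t0 s assume t0: "\<bar>t0\<bar> \<le> T" and s: "\<bar>s\<bar> \<le> S"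
    define g where "g \<sigma> = y (t0 + \<sigma>) - tp B (Suc n) (y t0) \<sigma>" for \<sigma>
    have gd: "(g has_vector_derivative (B *v (y (t0 + \<sigma>) - tp B n (y t0) \<sigma>))) (at \<sigma>)" for \<sigma>
    proof -
      have "((\<lambda>\<sigma>. t0 + \<sigma>) has_vector_derivative 1) (at \<sigma>)"
        using has_real_derivative_iff_has_vector_derivative[THEN iffD1, of "\<lambda>\<sigma>. t0 + \<sigma>" 1]
        by (auto intro!: derivative_eq_intros)
      from vector_diff_chain_at[OF this, of y "B *v y (t0 + \<sigma>)"] deriv
      have "((\<lambda>\<sigma>. y (t0 + \<sigma>)) has_vector_derivative B *v y (t0 + \<sigma>)) (at \<sigma>)" by (simp add: o_def)
      from has_vector_derivative_diff[OF this tp_deriv[of B n "y t0" \<sigma>]]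
      show ?thesis by (simp add: g_def[abs_def] matrix_vector_mult_diff_distrib)
    qed
    have "norm (g s - g 0) \<le> (KB * K * \<bar>s\<bar> ^ n) * norm (s - 0)"
    proof (rule differentiable_bound[of "closed_segment 0 s"])
      show "convex (closed_segment 0 s)" by simp
      fix x assume x: "x \<in> closed_segment 0 s"
      show "(g has_derivative (\<lambda>h. h *\<^sub>R (B *v (y (t0 + x) - tp B n (y t0) x)))) (at x within closed_segment 0 s)"
        using gd[of x] by (simp add: has_vector_derivative_def has_derivative_at_withinI)
      have ax: "\<bar>x\<bar> \<le> \<bar>s\<bar>" using x by (auto simp: closed_segment_eq_real_ivl split: if_splits)
      have "onorm (\<lambda>h. h *\<^sub>R (B *v (y (t0 + x) - tp B n (y t0) x))) = norm (B *v (y (t0 + x) - tp B n (y t0) x))"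
        using onorm_scaleR_left[OF bounded_linear_ident, of "B *v (y (t0 + x) - tp B n (y t0) x)"]
        by (simp add: onorm_id)
      also have "\<dots> \<le> norm (y (t0 + x) - tp B n (y t0) x) * KB" by (rule KB(2))
      also have "\<dots> \<le> (K * \<bar>x\<bar> ^ n) * KB"
        using K(2)[OF t0, of x] ax s KB(1) by (intro mult_right_mono) auto
      also have "\<dots> \<le> (K * \<bar>s\<bar> ^ n) * KB"
        using ax K(1) KB(1) by (intro mult_right_mono mult_left_mono power_mono) auto
      finally show "onorm (\<lambda>h. h *\<^sub>R (B *v (y (t0 + x) - tp B n (y t0) x))) \<le> KB * K * \<bar>s\<bar> ^ n"
        by (simp add: mult_ac)
    qed auto
    moreover have "g 0 = 0" by (simp add: g_def tp_0)
    ultimately show "norm (y (t0 + s) - tp B (Suc n) (y t0) s) \<le> KB * K * \<bar>s\<bar> ^ Suc n"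
      by (simp add: g_def mult_ac)
  qed
qed



lemma scal_gen:
  assumes "(\<Sum>l<k. w l * (a l)^r) = A / real (Suc r)"
  shows "h * (\<Sum>l<k. w l * ((a l * h)^r / fact r)) = h^(Suc r) * A / fact (Suc r)"
proof -
  have "(\<Sum>l<k. w l * ((a l * h)^r / fact r)) = (\<Sum>l<k. w l * (a l)^r) * (h^r / fact r)"
  proof -
    have "(\<Sum>l<k. w l * ((a l * h)^r / fact r)) = (\<Sum>l<k. (w l * a l^r) * (h^r/fact r))"
      by (intro sum.cong refl) (simp add: power_mult_distrib)
    also have "\<dots> = (\<Sum>l<k. w l * (a l)^r) * (h^r / fact r)" by (rule sum_distrib_right[symmetric])
    finally show ?thesis .
  qed
  thus ?thesis using assms by (simp add: fact_Suc field_simps del: of_nat_Suc)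
qed

lemma quad_tp:
  assumes "\<And>r. r < k \<Longrightarrow> h * (\<Sum>l<k. w l * ((s l)^r / fact r)) = coef r"
  shows "h *\<^sub>R (\<Sum>l<k. w l *\<^sub>R tp B k v (s l)) = (\<Sum>r<k. coef r *\<^sub>R (((*v) B ^^ r) v))"
proof -
  have "(\<Sum>l<k. w l *\<^sub>R tp B k v (s l)) = (\<Sum>l<k. \<Sum>r<k. (w l * ((s l)^r / fact r)) *\<^sub>R (((*v) B ^^ r) v))"
    by (simp add: tp_def scaleR_sum_right)
  also have "\<dots> = (\<Sum>r<k. (\<Sum>l<k. w l * ((s l)^r / fact r)) *\<^sub>R (((*v) B ^^ r) v))"
    by (subst sum.swap) (simp add: scaleR_sum_left)
  finally have "h *\<^sub>R (\<Sum>l<k. w l *\<^sub>R tp B k v (s l)) = (\<Sum>r<k. (h * (\<Sum>l<k. w l * ((s l)^r / fact r))) *\<^sub>R (((*v) B ^^ r) v))"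
    by (simp add: scaleR_sum_right)
  also have "\<dots> = (\<Sum>r<k. coef r *\<^sub>R (((*v) B ^^ r) v))"
    using assms by (intro sum.cong refl) simp
  finally show ?thesis .
qed

lemma tp_diff:
  "tp B (Suc k) v a - tp B (Suc k) v b = B *v (\<Sum>r<k. ((a^Suc r - b^Suc r) / fact (Suc r)) *\<^sub>R (((*v) B ^^ r) v))"
proof -
  have e: "tp B (Suc k) v x = v + (\<Sum>r<k. (x^Suc r / fact (Suc r)) *\<^sub>R (B *v (((*v) B ^^ r) v)))" for x
    unfolding tp_def by (subst sum.lessThan_Suc_shift) simp
  show ?thesis
    by (simp add: e mv_sum matrix_vector_mult_diff_distrib matrix_vector_mult_scaleR diff_divide_distrib scaleR_diff_left sum_subtractf)
qed

lemma sum_err: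
  fixes E :: "nat \<Rightarrow> 'a::real_normed_vector"
  assumes "\<And>l. l < k \<Longrightarrow> norm (E l) \<le> M"
  shows "norm (h *\<^sub>R (\<Sum>l<k. w l *\<^sub>R E l)) \<le> \<bar>h\<bar> * ((\<Sum>l<k. \<bar>w l\<bar>) * M)"
proof -
  have "norm (\<Sum>l<k. w l *\<^sub>R E l) \<le> (\<Sum>l<k. norm (w l *\<^sub>R E l))" by (rule norm_sum)
  also have "\<dots> \<le> (\<Sum>l<k. \<bar>w l\<bar> * M)"
    using assms by (intro sum_mono) (simp add: mult_left_mono)
  finally show ?thesis by (simp add: sum_distrib_right mult_left_mono)
qed



lemma local_err:
  fixes B P :: "real^'n^'n" and y :: "real \<Rightarrow> real^'n"
  assumes deriv: "\<forall>t. (y has_vector_derivative (B *v y t)) (at t)"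
    and k1: "k \<ge> 1" and p1: "p \<ge> 1" and mp: "m < p"
  shows "\<exists>C. \<forall>tn dt. \<bar>tn\<bar> \<le> T \<longrightarrow> 0 < dt \<longrightarrow> dt \<le> 1 \<longrightarrow>
    norm ((dt / real p) *\<^sub>R ((B ** (mat 1 - P)) *v (\<Sum>l<k. lts_beta k p m l *\<^sub>R y (tn - real l * dt)))
      + (dt / real p) *\<^sub>R ((B ** P) *v (\<Sum>l<k. ab_alpha k l *\<^sub>R y (tn + (real m - real l) * (dt / real p))))
      - (y (tn + (real m + 1) * (dt / real p)) - y (tn + real m * (dt / real p)))) \<le> C * dt ^ (k + 1)"
proof -
  define S where "S = real (p + k)"
  have S0: "S \<ge> 0" by (simp add: S_def)
  obtain K1 where K1: "K1 \<ge> 0" "\<And>t0 s. \<bar>t0\<bar> \<le> T \<Longrightarrow> \<bar>s\<bar> \<le> S \<Longrightarrow> norm (y (t0 + s) - tp B k (y t0) s) \<le> K1 * \<bar>s\<bar> ^ k"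
    using taylor_bound[OF deriv S0, of T k] by blast
  obtain K2 where K2: "K2 \<ge> 0" "\<And>t0 s. \<bar>t0\<bar> \<le> T \<Longrightarrow> \<bar>s\<bar> \<le> S \<Longrightarrow> norm (y (t0 + s) - tp B (Suc k) (y t0) s) \<le> K2 * \<bar>s\<bar> ^ Suc k"
    using taylor_bound[OF deriv S0, of T "Suc k"] by blast
  obtain KI where KI: "KI > 0" "\<And>v. norm ((B ** (mat 1 - P)) *v v) \<le> norm v * KI"
    using bounded_linear.pos_bounded[OF matrix_vector_mul_bounded_linear[of "B ** (mat 1 - P)"]] by blast
  obtain KP where KP: "KP > 0" "\<And>v. norm ((B ** P) *v v) \<le> norm v * KP"
    using bounded_linear.pos_bounded[OF matrix_vector_mul_bounded_linear[of "B ** P"]] by blast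
  define SA where "SA = (\<Sum>l<k. \<bar>ab_alpha k l\<bar>)"
  define SB where "SB = (\<Sum>l<k. \<bar>lts_beta k p m l\<bar>)"
  have SA0: "SA \<ge> 0" and SB0: "SB \<ge> 0" by (simp_all add: SA_def SB_def sum_nonneg)
  show ?thesis
  proof (intro exI[of _ "KI * (SB * (K1 * S ^ k)) + KP * (SA * (K1 * S ^ k)) + 2 * K2"] allI impI)
    fix tn dt :: real
    assume tn: "\<bar>tn\<bar> \<le> T" and dt0: "0 < dt" and dt1: "dt \<le> 1"
    define h where "h = dt / real p"
    have p0: "real p > 0" using p1 by simp
    have h0: "0 < h" and hdt: "h \<le> dt" using dt0 p1 by (auto simp: h_def field_simps)
    have dth: "dt = real p * h" using p0 by (simp add: h_def)
    define v where "v = y tn"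
    define c where "c r = ((*v) B ^^ r) v" for r
    define coef where "coef r = h^(Suc r) * ((real m + 1)^(Suc r) - real m^(Suc r)) / fact (Suc r)" for r
    define X where "X = (\<Sum>r<k. coef r *\<^sub>R c r)"
    define E1 where "E1 s = y (tn + s) - tp B k v s" for s
    define E2 where "E2 s = y (tn + s) - tp B (Suc k) v s" for s
    have E1b: "norm (E1 s) \<le> K1 * (S * dt) ^ k" if "\<bar>s\<bar> \<le> S * dt" for s
    proof -
      have "\<bar>s\<bar> \<le> S" using that S0 dt1 by (meson mult_left_le order_trans)
      hence "norm (E1 s) \<le> K1 * \<bar>s\<bar> ^ k" unfolding E1_def v_def by (rule K1(2)[OF tn])
      also have "\<dots> \<le> K1 * (S * dt) ^ k" using that K1(1) by (intro mult_left_mono power_mono) auto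
      finally show ?thesis .
    qed
    have E2b: "norm (E2 s) \<le> K2 * dt ^ Suc k" if "\<bar>s\<bar> \<le> dt" for s
    proof -
      have "dt \<le> S" using dt1 k1 by (simp add: S_def)
      hence "\<bar>s\<bar> \<le> S" using that by simp
      hence "norm (E2 s) \<le> K2 * \<bar>s\<bar> ^ Suc k" unfolding E2_def v_def by (rule K2(2)[OF tn])
      also have "\<dots> \<le> K2 * dt ^ Suc k" using that K2(1) by (intro mult_left_mono power_mono) auto
      finally show ?thesis .
    qed
    \<comment> \<open>exactness identities\<close>
    have eq2: "h *\<^sub>R (\<Sum>l<k. lts_beta k p m l *\<^sub>R tp B k v (- real l * dt)) = X"
      unfolding X_def c_def
    proof (rule quad_tp)
      fix r assume r: "r < k"
      have "(\<Sum>l<k. lts_beta k p m l * (- real l * real p) ^ r) = ((real m + 1)^(Suc r) - real m^(Suc r)) / real (Suc r)"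
        by (rule beta_exact[OF r p1])
      from scal_gen[OF this, of h]
      show "h * (\<Sum>l<k. lts_beta k p m l * ((- real l * dt) ^ r / fact r)) = coef r"
        by (simp add: coef_def dth mult_ac)
    qed
    have eq3: "h *\<^sub>R (\<Sum>l<k. ab_alpha k l *\<^sub>R tp B k v ((real m - real l) * h)) = X"
      unfolding X_def c_def
    proof (rule quad_tp)
      fix r assume r: "r < k"
      have "(\<Sum>l<k. ab_alpha k l * (real m - real l) ^ r) = ((real m + 1)^(Suc r) - real m^(Suc r)) / real (Suc r)"
        by (rule ab_exact[OF r])
      from scal_gen[OF this, of h]
      show "h * (\<Sum>l<k. ab_alpha k l * (((real m - real l) * h) ^ r / fact r)) = coef r"
        by (simp add: coef_def)
    qed
    have eq1: "tp B (Suc k) v ((real m + 1) * h) - tp B (Suc k) v (real m * h) = B *v X"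
    proof -
      have "((real m + 1) * h)^Suc r - (real m * h)^Suc r = h^Suc r * ((real m+1)^Suc r - real m^Suc r)" for r
        unfolding power_mult_distrib right_diff_distrib by (simp only: mult.commute)
      thus ?thesis unfolding tp_diff X_def coef_def c_def by (simp add: mult_ac)
    qed
    \<comment> \<open>decompositions\<close>
    define e2 where "e2 = h *\<^sub>R (\<Sum>l<k. lts_beta k p m l *\<^sub>R E1 (- real l * dt))"
    define e3 where "e3 = h *\<^sub>R (\<Sum>l<k. ab_alpha k l *\<^sub>R E1 ((real m - real l) * h))"
    define e1 where "e1 = E2 ((real m + 1) * h) - E2 (real m * h)"
    have U: "h *\<^sub>R (\<Sum>l<k. lts_beta k p m l *\<^sub>R y (tn - real l * dt)) = X + e2"
    proof -
      have "y (tn - real l * dt) = tp B k v (- real l * dt) + E1 (- real l * dt)" for l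
        by (simp add: E1_def)
      hence "(\<Sum>l<k. lts_beta k p m l *\<^sub>R y (tn - real l * dt)) =
          (\<Sum>l<k. lts_beta k p m l *\<^sub>R tp B k v (- real l * dt)) + (\<Sum>l<k. lts_beta k p m l *\<^sub>R E1 (- real l * dt))"
        by (simp add: scaleR_add_right sum.distrib)
      thus ?thesis using eq2 by (simp add: e2_def scaleR_add_right)
    qed
    have V: "h *\<^sub>R (\<Sum>l<k. ab_alpha k l *\<^sub>R y (tn + (real m - real l) * h)) = X + e3"
    proof -
      have "y (tn + (real m - real l) * h) = tp B k v ((real m - real l) * h) + E1 ((real m - real l) * h)" for l
        by (simp add: E1_def)
      hence "(\<Sum>l<k. ab_alpha k l *\<^sub>R y (tn + (real m - real l) * h)) =
          (\<Sum>l<k. ab_alpha k l *\<^sub>R tp B k v ((real m - real l) * h)) + (\<Sum>l<k. ab_alpha k l *\<^sub>R E1 ((real m - real l) * h))"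
        by (simp add: scaleR_add_right sum.distrib)
      thus ?thesis using eq3 by (simp add: e3_def scaleR_add_right)
    qed
    have W: "y (tn + (real m + 1) * h) - y (tn + real m * h) = B *v X + e1"
    proof -
      have "y (tn + (real m + 1) * h) - y (tn + real m * h) =
          (tp B (Suc k) v ((real m + 1) * h) - tp B (Suc k) v (real m * h)) + e1"
        by (simp add: e1_def E2_def)
      thus ?thesis using eq1 by simp
    qed
    have split: "(B ** (mat 1 - P)) *v X + (B ** P) *v X = B *v X"
      by (simp add: matrix_vector_mul_assoc[symmetric] matrix_vector_mult_diff_rdistrib
          matrix_vector_mult_diff_distrib)
    have tau: "h *\<^sub>R ((B ** (mat 1 - P)) *v (\<Sum>l<k. lts_beta k p m l *\<^sub>R y (tn - real l * dt)))
      + h *\<^sub>R ((B ** P) *v (\<Sum>l<k. ab_alpha k l *\<^sub>R y (tn + (real m - real l) * h)))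
      - (y (tn + (real m + 1) * h) - y (tn + real m * h))
      = (B ** (mat 1 - P)) *v e2 + (B ** P) *v e3 - e1"
    proof -
      have "h *\<^sub>R ((B ** (mat 1 - P)) *v (\<Sum>l<k. lts_beta k p m l *\<^sub>R y (tn - real l * dt)))
          = (B ** (mat 1 - P)) *v (X + e2)" using U by (simp add: matrix_vector_mult_scaleR[symmetric])
      moreover have "h *\<^sub>R ((B ** P) *v (\<Sum>l<k. ab_alpha k l *\<^sub>R y (tn + (real m - real l) * h)))
          = (B ** P) *v (X + e3)" using V by (simp add: matrix_vector_mult_scaleR[symmetric])
      ultimately show ?thesis using W split
        by (simp add: matrix_vector_right_distrib algebra_simps)
    qed
    \<comment> \<open>bounds\<close>
    have ne2: "norm e2 \<le> dt * (SB * (K1 * (S * dt) ^ k))"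
    proof -
      have "norm e2 \<le> \<bar>h\<bar> * (SB * (K1 * (S * dt) ^ k))"
        unfolding e2_def SB_def
      proof (rule sum_err)
        fix l assume "l < k"
        hence "\<bar>- real l * dt\<bar> \<le> S * dt" using dt0 by (simp add: S_def abs_mult)
        thus "norm (E1 (- real l * dt)) \<le> K1 * (S * dt) ^ k" by (rule E1b)
      qed
      also have "\<dots> \<le> dt * (SB * (K1 * (S * dt) ^ k))"
        using h0 hdt SB0 K1(1) S0 dt0 by (intro mult_right_mono) auto
      finally show ?thesis .
    qed
    have ne3: "norm e3 \<le> dt * (SA * (K1 * (S * dt) ^ k))"
    proof -
      have "norm e3 \<le> \<bar>h\<bar> * (SA * (K1 * (S * dt) ^ k))"
        unfolding e3_def SA_def
      proof (rule sum_err)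
        fix l assume "l < k"
        have "\<bar>real m - real l\<bar> \<le> S" using \<open>l < k\<close> mp by (simp add: S_def)
        hence "\<bar>(real m - real l) * h\<bar> \<le> S * dt"
          using h0 hdt S0 by (simp add: abs_mult) (rule mult_mono, auto)
        thus "norm (E1 ((real m - real l) * h)) \<le> K1 * (S * dt) ^ k" by (rule E1b)
      qed
      also have "\<dots> \<le> dt * (SA * (K1 * (S * dt) ^ k))"
        using h0 hdt SA0 K1(1) S0 dt0 by (intro mult_right_mono) auto
      finally show ?thesis .
    qed
    have ne1: "norm e1 \<le> 2 * K2 * dt ^ Suc k"
    proof -
      have a: "\<bar>(real m + 1) * h\<bar> \<le> dt" using mp h0 dth
        by (simp add: abs_mult)
      have b: "\<bar>real m * h\<bar> \<le> dt" using mp h0 dth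
        by (simp add: abs_mult)
      have "norm e1 \<le> norm (E2 ((real m + 1) * h)) + norm (E2 (real m * h))"
        unfolding e1_def by (rule norm_triangle_ineq4)
      also have "\<dots> \<le> K2 * dt ^ Suc k + K2 * dt ^ Suc k" using E2b[OF a] E2b[OF b] by simp
      finally show ?thesis by simp
    qed
    have "norm ((B ** (mat 1 - P)) *v e2 + (B ** P) *v e3 - e1)
        \<le> norm e2 * KI + norm e3 * KP + norm e1"
      using KI(2)[of e2] KP(2)[of e3] norm_triangle_ineq4[of "(B ** (mat 1 - P)) *v e2 + (B ** P) *v e3" e1]
        norm_triangle_ineq[of "(B ** (mat 1 - P)) *v e2" "(B ** P) *v e3"] by linarith
    also have "\<dots> \<le> dt * (SB * (K1 * (S * dt) ^ k)) * KI + dt * (SA * (K1 * (S * dt) ^ k)) * KP + 2 * K2 * dt ^ Suc k"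
      using ne1 ne2 ne3 KI(1) KP(1) by (intro add_mono mult_right_mono) auto
    also have "\<dots> = (KI * (SB * (K1 * S ^ k)) + KP * (SA * (K1 * S ^ k)) + 2 * K2) * dt ^ (k + 1)"
      by (simp add: power_mult_distrib algebra_simps)
    finally show "norm ((dt / real p) *\<^sub>R ((B ** (mat 1 - P)) *v (\<Sum>l<k. lts_beta k p m l *\<^sub>R y (tn - real l * dt)))
      + (dt / real p) *\<^sub>R ((B ** P) *v (\<Sum>l<k. ab_alpha k l *\<^sub>R y (tn + (real m - real l) * (dt / real p))))
      - (y (tn + (real m + 1) * (dt / real p)) - y (tn + real m * (dt / real p))))
      \<le> (KI * (SB * (K1 * S ^ k)) + KP * (SA * (K1 * S ^ k)) + 2 * K2) * dt ^ (k + 1)"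
      using tau by (simp add: h_def)
  qed
qed



lemma hist_stable: "q \<le> int m \<Longrightarrow> lts_hist k p B P dt yh yin (m + d) q = lts_hist k p B P dt yh yin m q"
  by (induction d) (auto simp: Let_def)

lemma hist_stable': "q \<le> int m \<Longrightarrow> m \<le> n \<Longrightarrow> lts_hist k p B P dt yh yin n q = lts_hist k p B P dt yh yin m q"
  using hist_stable[of q m k p B P dt yh yin "n - m"] by simp

lemma hist_step: "lts_hist k p B P dt yh yin (Suc m) (int (Suc m)) = lts_hist k p B P dt yh yin m (int m)
          + (dt / real p) *\<^sub>R ((B ** (mat 1 - P)) *v (\<Sum>l<k. lts_beta k p m l *\<^sub>R yh l))
          + (dt / real p) *\<^sub>R ((B ** P) *v (\<Sum>l<k. ab_alpha k l *\<^sub>R lts_hist k p B P dt yh yin m (int m - int l)))"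
  by (simp add: Let_def)

lemma hist_neg: "q \<le> 0 \<Longrightarrow> lts_hist k p B P dt yh yin m q = (if q = 0 then yh 0 else yin (nat (- q)))"
  using hist_stable'[of q 0 m k p B P dt yh yin] by simp

lemma P_idem:
  fixes P :: "real^'n^'n"
  assumes "\<forall>i j. i \<noteq> j \<longrightarrow> P $ i $ j = 0" "\<forall>i. P $ i $ i = 0 \<or> P $ i $ i = 1"
  shows "P ** P = P"
proof -
  have "(P ** P) $ i $ j = P $ i $ j" for i j
  proof -
    have "(P ** P) $ i $ j = (\<Sum>l\<in>UNIV. P $ i $ l * P $ l $ j)" by (simp add: matrix_matrix_mult_def)
    also have "\<dots> = (\<Sum>l\<in>UNIV. if l = i then P $ i $ i * P $ i $ j else 0)"
      using assms(1) by (intro sum.cong refl) auto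
    also have "\<dots> = P $ i $ i * P $ i $ j" by simp
    also have "\<dots> = P $ i $ j" using assms by (cases "i = j") auto
    finally show ?thesis .
  qed
  thus ?thesis by (simp add: vec_eq_iff)
qed



lemma rearr:
  fixes x1 :: "'a::real_vector"
  shows "x1 = a + A + h *\<^sub>R S1 \<Longrightarrow> t = A + h *\<^sub>R S2 - (e1 - e0) \<Longrightarrow> D = S1 - S2 \<Longrightarrow> x1 - e1 = (a - e0) + t + h *\<^sub>R D"
proof -
  assume "x1 = a + A + h *\<^sub>R S1" "t = A + h *\<^sub>R S2 - (e1 - e0)" "D = S1 - S2"
  moreover have "a + A + h *\<^sub>R S1 - e1 = (a - e0) + (A + h *\<^sub>R S2 - (e1 - e0)) + h *\<^sub>R (S1 - S2)"
    by (simp add: scaleR_diff_right algebra_simps)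
  ultimately show ?thesis by simp
qed

lemma main_ind:
  fixes k p :: nat and B P :: "real^'n^'n" and y :: "real \<Rightarrow> real^'n"
  assumes k1: "k \<ge> 1" and p1: "p \<ge> 1"
    and offd: "\<forall>i j. i \<noteq> j \<longrightarrow> P $ i $ j = 0"
    and diag: "\<forall>i. P $ i $ i = 0 \<or> P $ i $ i = 1"
    and deriv: "\<forall>t. (y has_vector_derivative (B *v y t)) (at t)"
  shows "m \<le> p \<Longrightarrow> \<exists>C\<ge>0. \<forall>tn dt. \<bar>tn\<bar> \<le> T \<longrightarrow> 0 < dt \<longrightarrow> dt \<le> 1 \<longrightarrow>
     (\<forall>j\<le>m. norm (lts_hist k p B P dt (\<lambda>l. y (tn - real l * dt)) (\<lambda>j. P *v y (tn - real j * dt / real p)) p (int j)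
        - y (tn + real j * (dt / real p))) \<le> C * dt ^ (k + 1))"
proof (induction m)
  case 0
  show ?case
  proof (intro exI[of _ 0] conjI allI impI)
    fix tn dt :: real and j :: nat assume "j \<le> 0"
    hence j: "j = 0" by simp
    show "norm (lts_hist k p B P dt (\<lambda>l. y (tn - real l * dt)) (\<lambda>j. P *v y (tn - real j * dt / real p)) p (int j)
        - y (tn + real j * (dt / real p))) \<le> 0 * dt ^ (k + 1)"
      using j by (simp add: hist_neg)
  qed simp
next
  case (Suc m)
  hence mp: "m < p" by simp
  have "\<exists>C\<ge>0. \<forall>tn dt. \<bar>tn\<bar> \<le> T \<longrightarrow> 0 < dt \<longrightarrow> dt \<le> 1 \<longrightarrow>
     (\<forall>j\<le>m. norm (lts_hist k p B P dt (\<lambda>l. y (tn - real l * dt)) (\<lambda>j. P *v y (tn - real j * dt / real p)) p (int j)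
        - y (tn + real j * (dt / real p))) \<le> C * dt ^ (k + 1))"
    using Suc.IH Suc.prems by simp
  then obtain C where C0: "C \<ge> 0" and CC: "\<forall>tn dt. \<bar>tn\<bar> \<le> T \<longrightarrow> 0 < dt \<longrightarrow> dt \<le> 1 \<longrightarrow>
     (\<forall>j\<le>m. norm (lts_hist k p B P dt (\<lambda>l. y (tn - real l * dt)) (\<lambda>j. P *v y (tn - real j * dt / real p)) p (int j)
        - y (tn + real j * (dt / real p))) \<le> C * dt ^ (k + 1))"
    by (elim exE conjE)
  have C: "C \<ge> 0" "\<And>tn dt j. \<bar>tn\<bar> \<le> T \<Longrightarrow> 0 < dt \<Longrightarrow> dt \<le> 1 \<Longrightarrow> j \<le> m \<Longrightarrow>
     norm (lts_hist k p B P dt (\<lambda>l. y (tn - real l * dt)) (\<lambda>j. P *v y (tn - real j * dt / real p)) p (int j)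
        - y (tn + real j * (dt / real p))) \<le> C * dt ^ (k + 1)"
    using C0 CC[rule_format] by auto
  obtain Ct where CtA: "\<forall>tn dt. \<bar>tn\<bar> \<le> T \<longrightarrow> 0 < dt \<longrightarrow> dt \<le> 1 \<longrightarrow>
    norm ((dt / real p) *\<^sub>R ((B ** (mat 1 - P)) *v (\<Sum>l<k. lts_beta k p m l *\<^sub>R y (tn - real l * dt)))
      + (dt / real p) *\<^sub>R ((B ** P) *v (\<Sum>l<k. ab_alpha k l *\<^sub>R y (tn + (real m - real l) * (dt / real p))))
      - (y (tn + (real m + 1) * (dt / real p)) - y (tn + real m * (dt / real p)))) \<le> Ct * dt ^ (k + 1)"
    using local_err[OF deriv k1 p1 mp, of T P] by (elim exE)
  note Ct = CtA[rule_format]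
  obtain KP where KP: "KP > 0" "\<And>v. norm ((B ** P) *v v) \<le> norm v * KP"
    using bounded_linear.pos_bounded[OF matrix_vector_mul_bounded_linear[of "B ** P"]] by blast
  define SA where "SA = (\<Sum>l<k. \<bar>ab_alpha k l\<bar>)"
  have SA0: "SA \<ge> 0" by (simp add: SA_def sum_nonneg)
  have PP: "P ** P = P" by (rule P_idem[OF offd diag])
  show ?case
  proof (intro exI[of _ "C + \<bar>Ct\<bar> + SA * (KP * C)"] conjI allI impI)
    show "0 \<le> C + \<bar>Ct\<bar> + SA * (KP * C)" using C(1) SA0 KP(1) by simp
    fix tn dt :: real and j :: nat
    assume tn: "\<bar>tn\<bar> \<le> T" and dt0: "0 < dt" and dt1: "dt \<le> 1" and j: "j \<le> Suc m"
    define yh where "yh = (\<lambda>l. y (tn - real l * dt))"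
    define yin where "yin = (\<lambda>j. P *v y (tn - real j * dt / real p))"
    define HF where "HF = lts_hist k p B P dt yh yin p"
    define h where "h = dt / real p"
    have h0: "0 < h" and hdt: "h \<le> dt" using dt0 p1 by (auto simp: h_def field_simps)
    have Cb: "C * dt ^ (k + 1) \<le> (C + \<bar>Ct\<bar> + SA * (KP * C)) * dt ^ (k + 1)"
      using C(1) SA0 KP(1) dt0 by (intro mult_right_mono) auto
    show "norm (lts_hist k p B P dt (\<lambda>l. y (tn - real l * dt)) (\<lambda>j. P *v y (tn - real j * dt / real p)) p (int j)
        - y (tn + real j * (dt / real p))) \<le> (C + \<bar>Ct\<bar> + SA * (KP * C)) * dt ^ (k + 1)"
    proof (cases "j \<le> m")
      case True
      thus ?thesis using C(2)[OF tn dt0 dt1 True] Cb by linarith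
    next
      case False
      hence jm: "j = Suc m" using j by simp
      define d where "d l = HF (int m - int l) - y (tn + (real m - real l) * h)" for l
      have dl: "norm ((B ** P) *v d l) \<le> KP * (C * dt ^ (k + 1))" if "l < k" for l
      proof (cases "l \<le> m")
        case True
        have e1: "int m - int l = int (m - l)" using True by simp
        have e2: "real m - real l = real (m - l)" using True by simp
        have "d l = HF (int (m - l)) - y (tn + real (m - l) * h)" by (simp only: d_def e1 e2)
        hence "norm (d l) \<le> C * dt ^ (k + 1)"
          using C(2)[OF tn dt0 dt1, of "m - l"] by (simp add: HF_def yh_def yin_def h_def)
        have "norm ((B ** P) *v d l) \<le> norm (d l) * KP" by (rule KP(2))
        also have "\<dots> \<le> (C * dt ^ (k + 1)) * KP" using \<open>norm (d l) \<le> C * dt ^ (k + 1)\<close> KP(1)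
          by (intro mult_right_mono) auto
        finally show ?thesis by (simp add: mult.commute)
      next
        case False
        have q: "int m - int l \<le> 0" "int m - int l \<noteq> 0" using False by auto
        have nl: "nat (- (int m - int l)) = l - m" using False by simp
        have rl: "real (l - m) = real l - real m" using False by simp
        have arg: "tn - real (l - m) * dt / real p = tn + (real m - real l) * h"
          unfolding rl h_def by (simp add: diff_divide_distrib algebra_simps)
        have "HF (int m - int l) = yin (nat (- (int m - int l)))" using q by (simp add: HF_def hist_neg)
        also have "\<dots> = P *v y (tn + (real m - real l) * h)" unfolding nl yin_def arg ..
        finally have HFl: "HF (int m - int l) = P *v y (tn + (real m - real l) * h)" .
        have BPP: "(B ** P) ** P = B ** P" using matrix_mul_assoc[of B P P] PP by simp
        have "(B ** P) *v d l = 0"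
          unfolding d_def HFl matrix_vector_mult_diff_distrib matrix_vector_mul_assoc BPP by simp
        thus ?thesis using KP(1) C(1) dt0 by simp
      qed
      have stepHF: "HF (int (Suc m)) = HF (int m)
          + h *\<^sub>R ((B ** (mat 1 - P)) *v (\<Sum>l<k. lts_beta k p m l *\<^sub>R yh l))
          + h *\<^sub>R ((B ** P) *v (\<Sum>l<k. ab_alpha k l *\<^sub>R HF (int m - int l)))"
      proof -
        have a: "HF (int (Suc m)) = lts_hist k p B P dt yh yin (Suc m) (int (Suc m))"
          unfolding HF_def using mp by (intro hist_stable') auto
        have b: "HF (int m) = lts_hist k p B P dt yh yin m (int m)"
          unfolding HF_def using mp by (intro hist_stable') auto
        have c: "HF (int m - int l) = lts_hist k p B P dt yh yin m (int m - int l)" for l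
          unfolding HF_def using mp by (intro hist_stable') auto
        from trans[OF a hist_step[of k p B P dt yh yin m]]
        show ?thesis unfolding h_def by (simp only: b[symmetric] c[symmetric])
      qed
      define tau where "tau = h *\<^sub>R ((B ** (mat 1 - P)) *v (\<Sum>l<k. lts_beta k p m l *\<^sub>R y (tn - real l * dt)))
      + h *\<^sub>R ((B ** P) *v (\<Sum>l<k. ab_alpha k l *\<^sub>R y (tn + (real m - real l) * h)))
      - (y (tn + (real m + 1) * h) - y (tn + real m * h))"
      have ntau: "norm tau \<le> Ct * dt ^ (k + 1)" using Ct[OF tn dt0 dt1] by (simp add: tau_def h_def)
      have dec: "HF (int (Suc m)) - y (tn + real (Suc m) * h) =
          (HF (int m) - y (tn + real m * h)) + tau + h *\<^sub>R (\<Sum>l<k. ab_alpha k l *\<^sub>R ((B ** P) *v d l))"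
      proof -
        have sd: "(\<Sum>l<k. ab_alpha k l *\<^sub>R ((B ** P) *v d l)) =
            (B ** P) *v (\<Sum>l<k. ab_alpha k l *\<^sub>R HF (int m - int l)) - (B ** P) *v (\<Sum>l<k. ab_alpha k l *\<^sub>R y (tn + (real m - real l) * h))"
          by (simp add: d_def mv_sum matrix_vector_mult_scaleR matrix_vector_mult_diff_distrib
              scaleR_diff_right sum_subtractf)
        show ?thesis unfolding of_nat_Suc[where 'a=real]
          by (rule rearr[OF stepHF _ sd]) (simp add: tau_def yh_def add.commute)
      qed
      have n1: "norm (HF (int m) - y (tn + real m * h)) \<le> C * dt ^ (k + 1)"
        using C(2)[OF tn dt0 dt1, of m] by (simp add: HF_def yh_def yin_def h_def)
      have n3: "norm (h *\<^sub>R (\<Sum>l<k. ab_alpha k l *\<^sub>R ((B ** P) *v d l))) \<le> \<bar>h\<bar> * (SA * (KP * (C * dt ^ (k + 1))))"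
        unfolding SA_def by (rule sum_err) (rule dl)
      also have "\<dots> \<le> SA * (KP * (C * dt ^ (k + 1)))"
        using h0 hdt dt1 SA0 KP(1) C(1) dt0 by (intro mult_left_le_one_le) auto
      finally have n3': "norm (h *\<^sub>R (\<Sum>l<k. ab_alpha k l *\<^sub>R ((B ** P) *v d l))) \<le> SA * (KP * (C * dt ^ (k + 1)))" .
      have "norm (HF (int (Suc m)) - y (tn + real (Suc m) * h))
          \<le> norm (HF (int m) - y (tn + real m * h)) + norm tau + norm (h *\<^sub>R (\<Sum>l<k. ab_alpha k l *\<^sub>R ((B ** P) *v d l)))"
        unfolding dec by (rule norm_triangle_le) (rule add_mono[OF norm_triangle_ineq order_refl])
      also have "\<dots> \<le> C * dt ^ (k + 1) + \<bar>Ct\<bar> * dt ^ (k + 1) + SA * (KP * (C * dt ^ (k + 1)))"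
      proof -
        have "Ct * dt ^ (k + 1) \<le> \<bar>Ct\<bar> * dt ^ (k + 1)" using dt0 by (intro mult_right_mono) auto
        thus ?thesis using n1 ntau n3' by linarith
      qed
      also have "\<dots> = (C + \<bar>Ct\<bar> + SA * (KP * C)) * dt ^ (k + 1)" by (simp add: algebra_simps)
      finally show ?thesis using jm by (simp add: HF_def yh_def yin_def h_def)
    qed
  qed
qed



theorem mainTheorem2:
  fixes k p :: nat and B P :: "real^'n^'n" and y :: "real \<Rightarrow> real^'n"
  assumes "k \<ge> 1" and "p \<ge> 1"
    and "\<forall>i j. i \<noteq> j \<longrightarrow> P $ i $ j = 0"
    and "\<forall>i. P $ i $ i = 0 \<or> P $ i $ i = 1"
    and "\<forall>t. (y has_vector_derivative (B *v y t)) (at t)"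
  shows "\<forall>T. \<exists>C \<delta>. \<delta> > 0 \<and>
           (\<forall>tn dt. \<bar>tn\<bar> \<le> T \<longrightarrow> 0 < dt \<longrightarrow> dt < \<delta> \<longrightarrow>
              norm (lts_step k p B P dt (\<lambda>l. y (tn - real l * dt))
                      (\<lambda>j. P *v y (tn - real j * dt / real p))
                    - y (tn + dt)) \<le> C * dt ^ (k + 1))"
proof (intro allI)
  fix T :: real
  obtain C where C0: "C \<ge> 0" and CC: "\<forall>tn dt. \<bar>tn\<bar> \<le> T \<longrightarrow> 0 < dt \<longrightarrow> dt \<le> 1 \<longrightarrow>
     (\<forall>j\<le>p. norm (lts_hist k p B P dt (\<lambda>l. y (tn - real l * dt)) (\<lambda>j. P *v y (tn - real j * dt / real p)) p (int j)
        - y (tn + real j * (dt / real p))) \<le> C * dt ^ (k + 1))"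
    using main_ind[OF assms, of p T, OF order_refl] by (elim exE conjE)
  show "\<exists>C \<delta>. \<delta> > 0 \<and>
           (\<forall>tn dt. \<bar>tn\<bar> \<le> T \<longrightarrow> 0 < dt \<longrightarrow> dt < \<delta> \<longrightarrow>
              norm (lts_step k p B P dt (\<lambda>l. y (tn - real l * dt))
                      (\<lambda>j. P *v y (tn - real j * dt / real p))
                    - y (tn + dt)) \<le> C * dt ^ (k + 1))"
  proof (rule exI[of _ C], rule exI[of _ "1::real"], intro conjI allI impI)
    fix tn dt :: real assume tn: "\<bar>tn\<bar> \<le> T" and dt0: "0 < dt" and dt1: "dt < 1"
    have "norm (lts_hist k p B P dt (\<lambda>l. y (tn - real l * dt)) (\<lambda>j. P *v y (tn - real j * dt / real p)) p (int p)
        - y (tn + real p * (dt / real p))) \<le> C * dt ^ (k + 1)"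
      using CC[rule_format, OF tn dt0 less_imp_le[OF dt1] order_refl] .
    moreover have "real p * (dt / real p) = dt" using assms(2) by simp
    ultimately show "norm (lts_step k p B P dt (\<lambda>l. y (tn - real l * dt))
                      (\<lambda>j. P *v y (tn - real j * dt / real p))
                    - y (tn + dt)) \<le> C * dt ^ (k + 1)"
      by (simp add: lts_step_def)
  qed simp
qed

end
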